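(* Assume the setting in the context, fix $\beta>0$ and $u_0\in L^2(0,1)$, and consider the closed-loop solution $u$ with the event-triggered boundary control. Let $N\ge1$ be an integer and set, with $\phi_n(x)=\sqrt2\sin(n\pi x)$, $k_n:=\int_0^1 k(y)\phi_n(y)\,dy$, $\lambda_n:=n^2\pi^2\theta-\lambda$, $$g:=\sum_{n=1}^N k_n\phi_n,\qquad F_N:=\sum_{n=1}^N\Big|k_n\phi_n'(1)\Big|,\qquad G_N:=\sum_{n=1}^N|k_n\lambda_n|.$$ Then for every event index $j\ge0$ and every $t\in[t_j,t_{j+1})$ (with $t$ finite), $$|d(t)|\le (t-t_j)\,\theta\|k\|\,F_N\,\|u[t_j]\|+(t-t_j)\,G_N\sup_{t_j\le s\le t}\|u[s]\|+\|k-g\|\,\|u[t_j]\|+\|k-g\|\,\|u[t]\|.$$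
   Context: Standing setting. Fix $\theta>0$, $\lambda\in\mathbb{R}$ with $\lambda\ge\theta\pi^2$, and a design parameter $c\ge0$; set $\kappa:=(\lambda+c)/\theta>0$. Define the kernel on $\{0\le y\le x\le1\}$ by $K(x,y)=-y\kappa\,\frac{I_1(\sqrt{\kappa(x^2-y^2)})}{\sqrt{\kappa(x^2-y^2)}}$ (extended continuously to $y=x$ by the value $-y\kappa/2$), where $I_1$ is the modified Bessel function of the first kind of order 1, and let $k(y):=K(1,y)$, $y\in[0,1]$. $\|\cdot\|$ is the $L^2(0,1)$ norm and $u[t]$ denotes $x\mapsto u(t,x)$. The closed-loop system is $u_t=\theta u_{xx}+\lambda u$ on $(0,1)$, $u(t,0)=0$, $u(t,1)=U_d(t)$, $u[0]=u_0\in L^2(0,1)$, under the event-triggered boundary control with parameter $\beta>0$ defined as follows. Set $t_0=0$. Given an event time $t_j$ and $u[t_j]$, let $u$ on $[t_j,\infty)$ be the (unique) solution with held boundary value $U_d(t)=\int_0^1k(y)u(t_j,y)\,dy$, where solution means: $t\mapsto u[t]$ continuous into $L^2(0,1)$ on $[t_j,\infty)$, $u\in C^1$ on $(t_j,\infty)\times[0,1]$, $u[t]\in C^2([0,1])$ for $t>t_j$, PDE and boundary conditions holding pointwise. Let $d(t):=\int_0^1k(y)\big(u(t_j,y)-u(t,y)\big)dy$ and $S_j:=\{t>t_j:\ |d(t)|>\beta\|k\|\,\|u[t]\|+\beta\|k\|\,\|u[t_j]\|\}$. If $S_j=\emptyset$ there are no further events ($t_{j+1}:=+\infty$); otherwise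 $t_{j+1}:=\inf S_j$, the control is $U_d(t)=\int_0^1k(y)u(t_j,y)dy$ for $t\in[t_j,t_{j+1})$, and the construction is repeated from $t_{j+1}$. *)

theory Defs
  imports "HOL-Analysis.Analysis"
begin

definition besselI1 :: "real \<Rightarrow> real" where
  "besselI1 z = (\<Sum>m. (z / 2) ^ (2 * m + 1) / (fact m * fact (m + 1)))"

definition kappa :: "real \<Rightarrow> real \<Rightarrow> real \<Rightarrow> real" where
  "kappa \<theta> lmb c = (lmb + c) / \<theta>"

text \<open>K(x,y) on 0 <= y <= x <= 1, continuously extended by -y*kappa/2 on the diagonal.\<close>
definition kernelK :: "real \<Rightarrow> real \<Rightarrow> real \<Rightarrow> real \<Rightarrow> real \<Rightarrow> real" where
  "kernelK \<theta> lmb c x y =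
     (let \<kappa> = kappa \<theta> lmb c; s = sqrt (\<kappa> * (x\<^sup>2 - y\<^sup>2)) in
      if y = x then - y * \<kappa> / 2 else - y * \<kappa> * besselI1 s / s)"

definition kgain :: "real \<Rightarrow> real \<Rightarrow> real \<Rightarrow> real \<Rightarrow> real" where
  "kgain \<theta> lmb c y = kernelK \<theta> lmb c 1 y"

definition sq_int :: "(real \<Rightarrow> real) \<Rightarrow> bool" where
  "sq_int f \<longleftrightarrow> f measurable_on {0..1} \<and> (\<lambda>x. (f x)\<^sup>2) integrable_on {0..1}"

definition l2norm :: "(real \<Rightarrow> real) \<Rightarrow> real" where
  "l2norm f = sqrt (integral {0..1} (\<lambda>x. (f x)\<^sup>2))"

text \<open>w solves u_t = theta u_xx + lambda u on (0,1), u(t,0)=0, u(t,1)=U on [a,oo):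
  t -> w t continuous into L^2 on [a,oo); w is C^1 on (a,oo) x [0,1];
  w t in C^2([0,1]) for t > a; PDE and boundary conditions pointwise.
  The initial datum is imposed separately.\<close>
definition heat_sol ::
  "real \<Rightarrow> real \<Rightarrow> real \<Rightarrow> real \<Rightarrow> (real \<Rightarrow> real \<Rightarrow> real) \<Rightarrow> bool" where
  "heat_sol \<theta> lmb a U w \<longleftrightarrow>
     (\<forall>t\<ge>a. sq_int (w t)) \<and>
     (\<forall>s\<ge>a. ((\<lambda>t. l2norm (\<lambda>x. w t x - w s x)) \<longlongrightarrow> 0) (at s within {a..})) \<and>
     (\<exists>wt wx wxx.
        continuous_on ({a<..} \<times> {0..1}) (\<lambda>p. wt (fst p) (snd p)) \<and>
        continuous_on ({a<..} \<times> {0..1}) (\<lambda>p. wx (fst p) (snd p)) \<and>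
        (\<forall>t>a. \<forall>x\<in>{0..1}. ((\<lambda>s. w s x) has_real_derivative wt t x) (at t)) \<and>
        (\<forall>t>a. \<forall>x\<in>{0..1}. (w t has_real_derivative wx t x) (at x within {0..1})) \<and>
        (\<forall>t>a. \<forall>x\<in>{0..1}. (wx t has_real_derivative wxx t x) (at x within {0..1})) \<and>
        (\<forall>t>a. continuous_on {0..1} (wxx t)) \<and>
        (\<forall>t>a. \<forall>x\<in>{0<..<1}. wt t x = \<theta> * wxx t x + lmb * w t x) \<and>
        (\<forall>t>a. w t 0 = 0 \<and> w t 1 = U))"

text \<open>te j are the event times (te j = \<infinity> means: no j-th event).  w j is the solution
  on [t_j, oo) with held boundary value; u coincides with w j on [t_j, t_{j+1}).\<close>
definition closed_loop ::
  "real \<Rightarrow> real \<Rightarrow> real \<Rightarrow> real \<Rightarrow> (real \<Rightarrow> real) \<Rightarrow> (real \<Rightarrow> real \<Rightarrow> real)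
   \<Rightarrow> (nat \<Rightarrow> ereal) \<Rightarrow> bool" where
  "closed_loop \<theta> lmb c \<beta> u0 u te \<longleftrightarrow>
     te 0 = 0 \<and> (\<forall>j. te j = \<infinity> \<longrightarrow> te (Suc j) = \<infinity>) \<and>
     (\<exists>w :: nat \<Rightarrow> real \<Rightarrow> real \<Rightarrow> real.
        w 0 0 = u0 \<and>
        (\<forall>j. te j \<noteq> \<infinity> \<longrightarrow>
           (let a = real_of_ereal (te j);
                k = kgain \<theta> lmb c;
                U = integral {0..1} (\<lambda>y. k y * w j a y);
                S = {t. t > a \<and>
                        \<bar>integral {0..1} (\<lambda>y. k y * (w j a y - w j t y))\<bar>
                          > \<beta> * l2norm k * l2norm (w j t) + \<beta> * l2norm k * l2norm (w j a)}
            in heat_sol \<theta> lmb a U (w j) \<and>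
               (S = {} \<longrightarrow> te (Suc j) = \<infinity>) \<and>
               (S \<noteq> {} \<longrightarrow> te (Suc j) = ereal (Inf S)) \<and>
               (\<forall>t. ereal a \<le> ereal t \<and> ereal t < te (Suc j) \<longrightarrow> u t = w j t) \<and>
               (te (Suc j) \<noteq> \<infinity> \<longrightarrow>
                  w (Suc j) (real_of_ereal (te (Suc j))) = w j (real_of_ereal (te (Suc j)))))))"

definition phi :: "nat \<Rightarrow> real \<Rightarrow> real" where
  "phi n x = sqrt 2 * sin (real n * pi * x)"

definition kcoef :: "real \<Rightarrow> real \<Rightarrow> real \<Rightarrow> nat \<Rightarrow> real" where
  "kcoef \<theta> lmb c n = integral {0..1} (\<lambda>y. kgain \<theta> lmb c y * phi n y)"

definition lam :: "real \<Rightarrow> real \<Rightarrow> nat \<Rightarrow> real" where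
  "lam \<theta> lmb n = (real n)\<^sup>2 * pi\<^sup>2 * \<theta> - lmb"

definition gN :: "real \<Rightarrow> real \<Rightarrow> real \<Rightarrow> nat \<Rightarrow> real \<Rightarrow> real" where
  "gN \<theta> lmb c N y = (\<Sum>n=1..N. kcoef \<theta> lmb c n * phi n y)"

definition FN :: "real \<Rightarrow> real \<Rightarrow> real \<Rightarrow> nat \<Rightarrow> real" where
  "FN \<theta> lmb c N = (\<Sum>n=1..N. \<bar>kcoef \<theta> lmb c n * deriv (phi n) 1\<bar>)"

definition GN :: "real \<Rightarrow> real \<Rightarrow> real \<Rightarrow> nat \<Rightarrow> real" where
  "GN \<theta> lmb c N = (\<Sum>n=1..N. \<bar>kcoef \<theta> lmb c n * lam \<theta> lmb n\<bar>)"

end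

theory Submission
  imports Defs
begin


lemma int_cmul: "f integrable_on S \<Longrightarrow> (\<lambda>x. c * f x :: real) integrable_on S"
  using integrable_on_cmult_left[of f S c] by simp

lemma meas_mult:
  assumes "f measurable_on {0..1::real}" "g measurable_on {0..1::real}"
  shows "(\<lambda>x. f x * g x :: real) measurable_on {0..1}"
  using measurable_on_bilinear[OF bilinear_times assms] by simp

lemma meas_borel: "(f::real\<Rightarrow>real) measurable_on {0..1} \<Longrightarrow> f \<in> borel_measurable (lebesgue_on {0..1})"
  by (simp add: measurable_on_iff_borel_measurable)

lemma sq_int_cont: "continuous_on {0..1} f \<Longrightarrow> sq_int f"
  unfolding sq_int_def
  by (auto simp: measurable_on_iff_borel_measurable intro!: continuous_imp_measurable_on_sets_lebesgue
      integrable_continuous_real continuous_intros)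

lemma sq_int_prod:
  assumes "sq_int f" "sq_int g"
  shows "(\<lambda>x. f x * g x) integrable_on {0..1}"
proof (rule measurable_bounded_by_integrable_imp_integrable_real)
  show "(\<lambda>x. f x * g x) \<in> borel_measurable (lebesgue_on {0..1})"
    using assms by (auto simp: sq_int_def intro!: meas_borel meas_mult)
  show "(\<lambda>x. (1/2) * (f x)\<^sup>2 + (1/2) * (g x)\<^sup>2) integrable_on {0..1}"
    using assms unfolding sq_int_def
    by (intro integrable_add) (auto intro: int_cmul)
  show "\<bar>f x * g x\<bar> \<le> (1/2) * (f x)\<^sup>2 + (1/2) * (g x)\<^sup>2" for x
  proof -
    have "0 \<le> (\<bar>f x\<bar> - \<bar>g x\<bar>)\<^sup>2" by simp
    then show ?thesis by (simp add: power2_eq_square abs_mult algebra_simps)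
  qed
qed auto

lemma sq_int_diff:
  assumes "sq_int f" "sq_int g"
  shows "sq_int (\<lambda>x. f x - g x)"
  unfolding sq_int_def
proof
  show m: "(\<lambda>x. f x - g x) measurable_on {0..1}"
    using assms by (auto simp: sq_int_def intro: measurable_on_diff)
  show "(\<lambda>x. (f x - g x)\<^sup>2) integrable_on {0..1}"
  proof (rule measurable_bounded_by_integrable_imp_integrable_real)
    show "(\<lambda>x. (f x - g x)\<^sup>2) \<in> borel_measurable (lebesgue_on {0..1})"
      using meas_mult[OF m m] by (auto simp: power2_eq_square intro!: meas_borel)
    show "(\<lambda>x. 2*(f x)\<^sup>2 + 2*(g x)\<^sup>2) integrable_on {0..1}"
      using assms unfolding sq_int_def
      by (intro integrable_add) (auto intro: int_cmul)
    show "\<bar>(f x - g x)\<^sup>2\<bar> \<le> 2*(f x)\<^sup>2 + 2*(g x)\<^sup>2" for x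
    proof -
      have "0 \<le> (f x + g x)\<^sup>2" by simp
      moreover have "(f x - g x)\<^sup>2 + (f x + g x)\<^sup>2 = 2*(f x)\<^sup>2 + 2*(g x)\<^sup>2"
        by (simp add: power2_eq_square algebra_simps)
      moreover have "\<bar>(f x - g x)\<^sup>2\<bar> = (f x - g x)\<^sup>2" by simp
      ultimately show ?thesis by linarith
    qed
  qed auto
qed

lemma sq_int_add:
  assumes "sq_int f" "sq_int g"
  shows "sq_int (\<lambda>x. f x + g x)"
proof -
  have "sq_int (\<lambda>x. 0::real)" by (rule sq_int_cont) simp
  then have "sq_int (\<lambda>x. 0 - g x)" using sq_int_diff[OF _ assms(2)] by blast
  then have "sq_int (\<lambda>x. f x - (0 - g x))" using sq_int_diff[OF assms(1)] by blast
  then show ?thesis by simp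
qed

lemma sq_int_cmul:
  assumes "sq_int f" shows "sq_int (\<lambda>x. r * f x)"
  using assms unfolding sq_int_def
  by (auto simp: power_mult_distrib intro: measurable_on_cmul int_cmul)

lemma l2_expand:
  assumes "sq_int f" "sq_int g"
  shows "integral {0..1} (\<lambda>x. (f x + r * g x)\<^sup>2) =
    integral {0..1} (\<lambda>x. (f x)\<^sup>2) + 2 * r * integral {0..1} (\<lambda>x. f x * g x)
     + r\<^sup>2 * integral {0..1} (\<lambda>x. (g x)\<^sup>2)"
proof -
  have i1: "(\<lambda>x. (f x)\<^sup>2) integrable_on {0..1}" "(\<lambda>x. (g x)\<^sup>2) integrable_on {0..1}"
    using assms by (auto simp: sq_int_def)
  have i2: "(\<lambda>x. f x * g x) integrable_on {0..1}" using sq_int_prod[OF assms] .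
  have "integral {0..1} (\<lambda>x. (f x + r * g x)\<^sup>2) =
     integral {0..1} (\<lambda>x. (f x)\<^sup>2 + (2*r) * (f x * g x) + r\<^sup>2 * (g x)\<^sup>2)"
    by (rule integral_cong) (simp add: power2_eq_square algebra_simps)
  also have "\<dots> = integral {0..1} (\<lambda>x. (f x)\<^sup>2 + (2*r) * (f x * g x))
      + integral {0..1} (\<lambda>x. r\<^sup>2 * (g x)\<^sup>2)"
    using i1 i2
    by (intro integral_add integrable_add int_cmul)
  also have "\<dots> = integral {0..1} (\<lambda>x. (f x)\<^sup>2) + integral {0..1} (\<lambda>x. (2*r) * (f x * g x))
      + integral {0..1} (\<lambda>x. r\<^sup>2 * (g x)\<^sup>2)"
    using i1 i2
    by (subst integral_add) (auto intro: int_cmul)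
  finally show ?thesis by simp
qed

lemma CS:
  assumes "sq_int f" "sq_int g"
  shows "\<bar>integral {0..1} (\<lambda>x. f x * g x)\<bar> \<le> l2norm f * l2norm g"
proof -
  define A where "A = integral {0..1} (\<lambda>x. (f x)\<^sup>2)"
  define B where "B = integral {0..1} (\<lambda>x. f x * g x)"
  define C where "C = integral {0..1} (\<lambda>x. (g x)\<^sup>2)"
  have q: "0 \<le> A + 2 * r * B + r\<^sup>2 * C" for r
  proof -
    have "0 \<le> integral {0..1} (\<lambda>x. (f x + r * g x)\<^sup>2)"
      using sq_int_add[OF assms(1) sq_int_cmul[OF assms(2)], of r]
      by (intro integral_nonneg) (auto simp: sq_int_def)
    then show ?thesis using l2_expand[OF assms, of r] by (simp add: A_def B_def C_def)
  qed
  have C0: "C \<ge> 0" unfolding C_def using assms by (intro integral_nonneg) (auto simp: sq_int_def)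
  have A0: "A \<ge> 0" unfolding A_def using assms by (intro integral_nonneg) (auto simp: sq_int_def)
  have "B\<^sup>2 \<le> A * C"
  proof (cases "C = 0")
    case True
    have "B = 0"
    proof (rule ccontr)
      assume "B \<noteq> 0"
      then have "0 \<le> A + 2 * (-(A+1)/(2*B)) * B" using q[of "-(A+1)/(2*B)"] True by simp
      then show False using \<open>B \<noteq> 0\<close> by (simp add: field_simps)
    qed
    then show ?thesis using True by simp
  next
    case False
    then have Cp: "C > 0" using C0 by simp
    have "0 \<le> A + 2 * (-B/C) * B + (-B/C)\<^sup>2 * C" using q .
    then have "0 \<le> (A + 2 * (-B/C) * B + (-B/C)\<^sup>2 * C) * C" using Cp by simp
    also have "\<dots> = A * C - B\<^sup>2" using Cp by (simp add: field_simps power2_eq_square)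
    finally show ?thesis by simp
  qed
  then have "sqrt (B\<^sup>2) \<le> sqrt (A * C)" by (rule real_sqrt_le_mono)
  then show ?thesis by (simp add: l2norm_def A_def B_def C_def real_sqrt_mult)
qed

lemma l2norm_nonneg: "l2norm f \<ge> 0"
  unfolding l2norm_def
  by (cases "(\<lambda>x. (f x)\<^sup>2) integrable_on {0..1}") (auto simp: integral_nonneg not_integrable_integral)

lemma l2_tri:
  assumes "sq_int f" "sq_int g"
  shows "l2norm (\<lambda>x. f x + g x) \<le> l2norm f + l2norm g"
proof -
  define A where "A = integral {0..1} (\<lambda>x. (f x)\<^sup>2)"
  define C where "C = integral {0..1} (\<lambda>x. (g x)\<^sup>2)"
  have C0: "C \<ge> 0" unfolding C_def using assms by (intro integral_nonneg) (auto simp: sq_int_def)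
  have A0: "A \<ge> 0" unfolding A_def using assms by (intro integral_nonneg) (auto simp: sq_int_def)
  have "integral {0..1} (\<lambda>x. (f x + g x)\<^sup>2) = A + 2 * integral {0..1} (\<lambda>x. f x * g x) + C"
    using l2_expand[OF assms, of 1] by (simp add: A_def C_def)
  also have "\<dots> \<le> A + 2 * (sqrt A * sqrt C) + C"
    using CS[OF assms] by (simp add: l2norm_def A_def C_def)
  also have "\<dots> = (sqrt A + sqrt C)\<^sup>2" using A0 C0 by (simp add: power2_eq_square algebra_simps)
  finally have "sqrt (integral {0..1} (\<lambda>x. (f x + g x)\<^sup>2)) \<le> sqrt ((sqrt A + sqrt C)\<^sup>2)"
    by (rule real_sqrt_le_mono)
  then show ?thesis using A0 C0 by (simp add: l2norm_def A_def C_def)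
qed




definition Pc :: "nat \<Rightarrow> real" where "Pc m = 1 / (2 * fact m * fact (m + 1))"
definition PP :: "real \<Rightarrow> real" where "PP x = (\<Sum>m. Pc m * x ^ m)"

lemma Pc_summable: "summable (\<lambda>m. Pc m * y ^ m)"
proof (rule summable_comparison_test')
  show "summable (\<lambda>m. \<bar>y\<bar> ^ m /\<^sub>R fact m)" by (rule summable_exp_generic)
  fix m :: nat
  have f1: "fact m \<ge> (1::real)" by simp
  have f2: "fact (m+1) \<ge> (1::real)" by (rule fact_ge_1)
  have "norm (Pc m * y ^ m) = \<bar>y\<bar> ^ m / (2 * fact m * fact (m + 1))"
    by (simp add: Pc_def abs_mult power_abs)
  also have "\<dots> \<le> \<bar>y\<bar> ^ m / fact m"
  proof (rule divide_left_mono)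
    have "fact m * 1 \<le> fact m * (2 * (fact (m+1) :: real))"
      by (rule mult_left_mono) (use f2 in auto)
    then show "fact m \<le> 2 * fact m * (fact (m+1) :: real)" by (simp add: mult_ac)
  qed (use f1 f2 in auto)
  finally show "norm (Pc m * y ^ m) \<le> \<bar>y\<bar> ^ m /\<^sub>R fact m" by (simp add: divide_inverse_commute)
qed

lemma PP_cont: "isCont PP x"
  unfolding PP_def fun_eq_iff by (rule isCont_powser_converges_everywhere) (rule Pc_summable)

lemma PP_0: "PP 0 = 1/2"
proof -
  have "PP 0 = Pc 0" unfolding PP_def by (rule powser_zero)
  then show ?thesis by (simp add: Pc_def)
qed

lemma besselI1_PP: "besselI1 z = z * PP ((z/2)^2)"
proof -
  have "besselI1 z = (\<Sum>m. z * (Pc m * ((z/2)^2) ^ m))"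
    unfolding besselI1_def
  proof (rule suminf_cong)
    fix m
    have e: "(z/2) ^ (2*m+1) = (z/2) * ((z/2)^2)^m" by (simp add: power_mult[symmetric] mult.commute)
    have gen: "\<And>Q. z/2 * Q / (fact m * fact (m+1)) = z * (Pc m * Q)" by (simp add: Pc_def field_simps)
    show "(z / 2) ^ (2 * m + 1) / (fact m * fact (m + 1)) = z * (Pc m * ((z/2)^2) ^ m)"
      unfolding e by (rule gen)
  qed
  also have "\<dots> = z * PP ((z/2)^2)" unfolding PP_def by (rule suminf_mult[OF Pc_summable])
  finally show ?thesis .
qed

lemma kgain_formula:
  assumes "kappa \<theta> lmb c > 0" "y \<in> {0..1}"
  shows "kgain \<theta> lmb c y = - y * kappa \<theta> lmb c * PP (kappa \<theta> lmb c * (1 - y\<^sup>2) / 4)"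
proof (cases "y = 1")
  case True then show ?thesis by (simp add: kgain_def kernelK_def PP_0)
next
  case False
  define \<kappa> where "\<kappa> = kappa \<theta> lmb c"
  define s where "s = sqrt (\<kappa> * (1 - y\<^sup>2))"
  have "y < 1" using False assms(2) by auto
  then have "y\<^sup>2 < 1" using assms(2) by (simp add: power_less_one_iff abs_if)
  then have pos: "\<kappa> * (1 - y\<^sup>2) > 0" using assms(1) by (simp add: \<kappa>_def)
  then have "s > 0" by (simp add: s_def)
  have eq: "(s/2)^2 = \<kappa> * (1 - y\<^sup>2) / 4" using pos by (simp add: s_def power_divide)
  have "besselI1 s / s = PP (\<kappa> * (1 - y\<^sup>2) / 4)" using \<open>s > 0\<close> unfolding besselI1_PP eq by simp
  then have "y * \<kappa> * besselI1 s / s = y * \<kappa> * PP (\<kappa> * (1 - y\<^sup>2) / 4)"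
    by (metis times_divide_eq_right)
  then show ?thesis using False
    by (simp add: kgain_def kernelK_def Let_def \<kappa>_def[symmetric] s_def[symmetric] del: PP_def)
qed

lemma kgain_cont:
  assumes "kappa \<theta> lmb c > 0"
  shows "continuous_on {0..1} (kgain \<theta> lmb c)"
proof -
  have "continuous_on {0..1} (\<lambda>y. - y * kappa \<theta> lmb c * PP (kappa \<theta> lmb c * (1 - y\<^sup>2) / 4))"
  proof -
    have P: "continuous_on UNIV PP" by (simp add: continuous_at_imp_continuous_on PP_cont)
    have "continuous_on {0..1} (\<lambda>y. PP (kappa \<theta> lmb c * (1 - y\<^sup>2) / 4))"
      by (rule continuous_on_compose2[OF P]) (auto intro!: continuous_intros)
    then show ?thesis by (intro continuous_on_mult continuous_intros)
  qed
  then show ?thesis by (rule continuous_on_eq) (simp add: kgain_formula[OF assms])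
qed

definition dphi :: "nat \<Rightarrow> real \<Rightarrow> real" where
  "dphi n x = sqrt 2 * (real n * pi) * cos (real n * pi * x)"

lemma phi_deriv: "(phi n has_real_derivative dphi n x) (at x)"
  unfolding phi_def dphi_def
  by (auto intro!: derivative_eq_intros)

lemma dphi_deriv: "(dphi n has_real_derivative (- (real n * pi)\<^sup>2 * phi n x)) (at x)"
  unfolding phi_def dphi_def
  by (auto intro!: derivative_eq_intros simp: power2_eq_square)

lemma deriv_phi: "deriv (phi n) x = dphi n x"
  by (rule DERIV_imp_deriv[OF phi_deriv])

lemma phi_0: "phi n 0 = 0" and phi_1: "phi n 1 = 0"
  by (simp_all add: phi_def)

lemma phi_cont: "continuous_on S (phi n)"
  unfolding phi_def by (intro continuous_intros)

lemma sq_int_phi: "sq_int (phi n)"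
  by (rule sq_int_cont[OF phi_cont])

lemma l2norm_phi:
  assumes "n \<ge> 1" shows "l2norm (phi n) = 1"
proof -
  define F where "F x = x - sin (2 * real n * pi * x) / (2 * real n * pi)" for x
  have "((\<lambda>x. (phi n x)\<^sup>2) has_integral F 1 - F 0) {0..1}"
  proof (rule fundamental_theorem_of_calculus)
    fix x :: real
    have "(F has_real_derivative 1 - cos (2 * real n * pi * x)) (at x)"
      unfolding F_def using assms by (auto intro!: derivative_eq_intros)
    moreover have "1 - cos (2 * real n * pi * x) = (phi n x)\<^sup>2"
      using cos_double_sin[of "real n * pi * x"] by (simp add: phi_def power_mult_distrib mult.assoc)
    ultimately show "(F has_vector_derivative (phi n x)\<^sup>2) (at x within {0..1})"
      by (simp add: has_real_derivative_iff_has_vector_derivative[symmetric] has_field_derivative_at_within)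
  qed simp
  moreover have "F 1 - F 0 = 1"
    using sin_npi[of "2*n"] by (simp add: F_def mult.assoc)
  ultimately show ?thesis by (simp add: l2norm_def integral_unique)
qed




lemma coef_deriv:
  assumes hs: "heat_sol \<theta> lmb a U w" and s: "s > a"
  shows "((\<lambda>r. integral {0..1} (\<lambda>x. phi n x * w r x)) has_real_derivative
          (- \<theta> * dphi n 1 * U - lam \<theta> lmb n * integral {0..1} (\<lambda>x. phi n x * w s x))) (at s)"
proof -
  obtain wt wx wxx where
    ct: "continuous_on ({a<..} \<times> {0..1}) (\<lambda>p. wt (fst p) (snd p))" and
    dt: "\<forall>t>a. \<forall>x\<in>{0..1}. ((\<lambda>s. w s x) has_real_derivative wt t x) (at t)" and
    dx: "\<forall>t>a. \<forall>x\<in>{0..1}. (w t has_real_derivative wx t x) (at x within {0..1})" and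
    dxx: "\<forall>t>a. \<forall>x\<in>{0..1}. (wx t has_real_derivative wxx t x) (at x within {0..1})" and
    cxx: "\<forall>t>a. continuous_on {0..1} (wxx t)" and
    pde: "\<forall>t>a. \<forall>x\<in>{0<..<1}. wt t x = \<theta> * wxx t x + lmb * w t x" and
    bc: "\<forall>t>a. w t 0 = 0 \<and> w t 1 = U"
    using hs unfolding heat_sol_def by blast
  have wcont: "continuous_on {0..1} (w r)" if "r > a" for r
    using dx that by (intro DERIV_continuous_on) blast
  define c where "c = integral {0..1} (\<lambda>x. phi n x * w s x)"
  have L: "((\<lambda>r. integral (cbox 0 1) (\<lambda>x. phi n x * w r x)) has_field_derivative
      integral (cbox 0 1) (\<lambda>x. phi n x * wt s x)) (at s within {a<..})"
  proof (rule leibniz_rule_field_derivative[where fx = "\<lambda>r x. phi n x * wt r x"])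
    fix r x assume r: "r \<in> {a<..}" and x: "x \<in> cbox (0::real) 1"
    show "((\<lambda>r. phi n x * w r x) has_field_derivative phi n x * wt r x) (at r within {a<..})"
    proof -
      have "((\<lambda>r. w r x) has_real_derivative wt r x) (at r)" using dt r x by auto
      then show ?thesis by (rule has_field_derivative_at_within[OF DERIV_cmult])
    qed
  next
    fix r assume r: "r \<in> {a<..}"
    show "(\<lambda>x. phi n x * w r x) integrable_on cbox 0 1"
      using wcont[of r] r by (auto intro!: integrable_continuous_real continuous_intros phi_cont)
  next
    have c1: "continuous_on ({a<..} \<times> {0..1}) (\<lambda>p. phi n (snd p))"
      unfolding phi_def by (intro continuous_intros)
    have "continuous_on ({a<..} \<times> {0..1}) (\<lambda>p. phi n (snd p) * wt (fst p) (snd p))"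
      by (rule continuous_on_mult[OF c1 ct])
    then show "continuous_on ({a<..} \<times> cbox 0 1) (\<lambda>(r, x). phi n x * wt r x)"
      by (simp add: case_prod_beta)
  qed (use s in auto)
  then have L': "((\<lambda>r. integral {0..1} (\<lambda>x. phi n x * w r x)) has_field_derivative
      integral {0..1} (\<lambda>x. phi n x * wt s x)) (at s)"
  proof -
    have e1: "at s within {a<..} = at s" by (rule at_within_open) (use s in auto)
    have e2: "cbox 0 (1::real) = {0..1}" by simp
    show ?thesis using L unfolding e1 e2 .
  qed
  have iw: "(\<lambda>x. phi n x * w s x) integrable_on {0..1}"
    using wcont[OF s] by (auto intro!: integrable_continuous_real continuous_intros phi_cont)
  have ixx: "(\<lambda>x. phi n x * wxx s x) integrable_on {0..1}"
    using cxx s by (auto intro!: integrable_continuous_real continuous_intros phi_cont)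
  have I1: "integral {0..1} (\<lambda>x. phi n x * wt s x) =
      \<theta> * integral {0..1} (\<lambda>x. phi n x * wxx s x) + lmb * c"
  proof -
    have "integral {0..1} (\<lambda>x. phi n x * wt s x) =
        integral {0..1} (\<lambda>x. \<theta> * (phi n x * wxx s x) + lmb * (phi n x * w s x))"
    proof (rule integral_spike[where S = "{0,1}"])
      fix x assume "x \<in> {0..1::real} - {0,1}"
      then have "x \<in> {0<..<1}" by auto
      then show "\<theta> * (phi n x * wxx s x) + lmb * (phi n x * w s x) = phi n x * wt s x"
        using pde s by (simp add: algebra_simps)
    qed simp
    also have "\<dots> = \<theta> * integral {0..1} (\<lambda>x. phi n x * wxx s x) + lmb * c"
      using iw ixx by (simp add: integral_add int_cmul c_def)
    finally show ?thesis .
  qed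
  define h where "h x = phi n x * wx s x - dphi n x * w s x" for x
  have "((\<lambda>x. phi n x * wxx s x + (real n * pi)\<^sup>2 * (phi n x * w s x)) has_integral (h 1 - h 0)) {0..1}"
  proof (rule fundamental_theorem_of_calculus)
    fix x :: real assume x: "x \<in> {0..1}"
    have "(h has_field_derivative
       (dphi n x * wx s x + wxx s x * phi n x) - ((- (real n * pi)\<^sup>2 * phi n x) * w s x + wx s x * dphi n x))
       (at x within {0..1})"
      unfolding h_def
    proof (intro DERIV_diff DERIV_mult)
      show "(phi n has_real_derivative dphi n x) (at x within {0..1})"
        by (rule has_field_derivative_at_within[OF phi_deriv])
      show "(dphi n has_real_derivative (- (real n * pi)\<^sup>2 * phi n x)) (at x within {0..1})"
        by (rule has_field_derivative_at_within[OF dphi_deriv])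
      show "(wx s has_real_derivative wxx s x) (at x within {0..1})" using dxx s x by blast
      show "(w s has_real_derivative wx s x) (at x within {0..1})" using dx s x by blast
    qed
    then have "(h has_field_derivative phi n x * wxx s x + (real n * pi)\<^sup>2 * (phi n x * w s x))
       (at x within {0..1})"
      by (rule DERIV_cong) (simp add: algebra_simps)
    then show "(h has_vector_derivative phi n x * wxx s x + (real n * pi)\<^sup>2 * (phi n x * w s x))
       (at x within {0..1})"
      by (simp add: has_real_derivative_iff_has_vector_derivative[symmetric])
  qed simp
  moreover have "h 1 - h 0 = - dphi n 1 * U"
    using bc s by (simp add: h_def phi_0 phi_1)
  ultimately have "integral {0..1} (\<lambda>x. phi n x * wxx s x + (real n * pi)\<^sup>2 * (phi n x * w s x)) = - dphi n 1 * U"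
    by (simp add: integral_unique)
  then have I2: "integral {0..1} (\<lambda>x. phi n x * wxx s x) = - dphi n 1 * U - (real n * pi)\<^sup>2 * c"
    using iw ixx by (simp add: integral_add int_cmul c_def)
  have "integral {0..1} (\<lambda>x. phi n x * wt s x) = - \<theta> * dphi n 1 * U - lam \<theta> lmb n * c"
    unfolding I1 I2 lam_def by (simp add: algebra_simps power_mult_distrib)
  then show ?thesis using L' by (simp add: c_def)
qed




lemma l2norm_minus_commute: "l2norm (\<lambda>x. f x - g x) = l2norm (\<lambda>x. g x - f x)"
  unfolding l2norm_def by (simp add: power2_commute)

lemma l2norm_diff_bound:
  assumes "sq_int f" "sq_int g"
  shows "\<bar>l2norm f - l2norm g\<bar> \<le> l2norm (\<lambda>x. f x - g x)"
proof -
  have "l2norm f = l2norm (\<lambda>x. (f x - g x) + g x)" by simp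
  also have "\<dots> \<le> l2norm (\<lambda>x. f x - g x) + l2norm g"
    by (rule l2_tri[OF sq_int_diff[OF assms] assms(2)])
  finally have 1: "l2norm f \<le> l2norm (\<lambda>x. f x - g x) + l2norm g" .
  have "l2norm g = l2norm (\<lambda>x. (g x - f x) + f x)" by simp
  also have "\<dots> \<le> l2norm (\<lambda>x. g x - f x) + l2norm f"
    by (rule l2_tri[OF sq_int_diff[OF assms(2,1)] assms(1)])
  finally have 2: "l2norm g \<le> l2norm (\<lambda>x. f x - g x) + l2norm f"
    using l2norm_minus_commute[of g f] by simp
  show ?thesis using 1 2 by linarith
qed

lemma heat_sq: "heat_sol \<theta> lmb a U W \<Longrightarrow> s \<ge> a \<Longrightarrow> sq_int (W s)"
  unfolding heat_sol_def by blast

lemma heat_L2: "heat_sol \<theta> lmb a U W \<Longrightarrow> s \<ge> a \<Longrightarrow>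
   ((\<lambda>r. l2norm (\<lambda>x. W r x - W s x)) \<longlongrightarrow> 0) (at s within {a..})"
  unfolding heat_sol_def by blast

lemma norm_cont:
  assumes hs: "heat_sol \<theta> lmb a U W"
  shows "continuous_on {a..t} (\<lambda>s. l2norm (W s))"
  unfolding continuous_on_eq_continuous_within
proof
  fix s assume s: "s \<in> {a..t}"
  have ev: "eventually (\<lambda>r. norm (l2norm (W r) - l2norm (W s)) \<le> l2norm (\<lambda>x. W r x - W s x)) (at s within {a..})"
  proof -
    have "eventually (\<lambda>r. r \<in> {a..}) (at s within {a..})" by (simp add: eventually_at_filter)
    then show ?thesis
      by eventually_elim (use s hs in \<open>auto intro!: l2norm_diff_bound heat_sq\<close>)
  qed
  have "((\<lambda>r. l2norm (W r) - l2norm (W s)) \<longlongrightarrow> 0) (at s within {a..})"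
    by (rule Lim_null_comparison[OF ev heat_L2[OF hs]]) (use s in auto)
  then have "((\<lambda>r. l2norm (W r)) \<longlongrightarrow> l2norm (W s)) (at s within {a..})"
    by (simp add: LIM_zero_iff)
  then have "((\<lambda>r. l2norm (W r)) \<longlongrightarrow> l2norm (W s)) (at s within {a..t})"
    by (rule tendsto_within_subset) auto
  then show "continuous (at s within {a..t}) (\<lambda>s. l2norm (W s))"
    by (simp add: continuous_within)
qed

lemma norm_bdd:
  assumes hs: "heat_sol \<theta> lmb a U W" and s: "s \<in> {a..t}"
  shows "l2norm (W s) \<le> Sup ((\<lambda>s. l2norm (W s)) ` {a..t})"
proof (rule cSup_upper)
  show "l2norm (W s) \<in> (\<lambda>s. l2norm (W s)) ` {a..t}" using s by auto
  have "compact ((\<lambda>s. l2norm (W s)) ` {a..t})"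
    by (rule compact_continuous_image[OF norm_cont[OF hs]]) simp
  then show "bdd_above ((\<lambda>s. l2norm (W s)) ` {a..t})"
    by (intro bounded_imp_bdd_above compact_imp_bounded)
qed

lemma coef_bound_pt:
  assumes hs: "heat_sol \<theta> lmb a U W" and s: "s \<ge> a" and n: "n \<ge> 1"
  shows "\<bar>integral {0..1} (\<lambda>x. phi n x * W s x)\<bar> \<le> l2norm (W s)"
  using CS[OF sq_int_phi heat_sq[OF hs s], of n] l2norm_phi[OF n] by simp

lemma coef_est:
  assumes hs: "heat_sol \<theta> lmb a U W" and at: "a < t" and n: "n \<ge> 1" and th: "\<theta> > 0"
  defines "M \<equiv> Sup ((\<lambda>s. l2norm (W s)) ` {a..t})"
  shows "\<bar>integral {0..1} (\<lambda>x. phi n x * W t x) - integral {0..1} (\<lambda>x. phi n x * W a x)\<bar>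
     \<le> (t - a) * (\<theta> * \<bar>dphi n 1\<bar> * \<bar>U\<bar> + \<bar>lam \<theta> lmb n\<bar> * M)"
proof -
  define c where "c s = integral {0..1} (\<lambda>x. phi n x * W s x)" for s
  define B where "B = \<theta> * \<bar>dphi n 1\<bar> * \<bar>U\<bar> + \<bar>lam \<theta> lmb n\<bar> * M"
  have cM: "\<bar>c s\<bar> \<le> M" if "s \<in> {a..t}" for s
    using coef_bound_pt[OF hs _ n, of s] norm_bdd[OF hs that] that by (simp add: c_def M_def)
  have B0: "B \<ge> 0"
  proof -
    have "0 \<le> \<bar>c a\<bar>" by simp
    also have "\<dots> \<le> M" using cM[of a] at by simp
    finally show ?thesis unfolding B_def using th by simp
  qed
  show ?thesis unfolding c_def[symmetric] B_def[symmetric]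
  proof (rule field_le_epsilon)
    fix e :: real assume e: "e > 0"
    have "eventually (\<lambda>r. dist (l2norm (\<lambda>x. W r x - W a x)) 0 < e) (at a within {a..})"
      using heat_L2[OF hs order_refl] e by (rule tendstoD)
    then obtain d where d: "d > 0" and dP0: "\<forall>r\<in>{a..}. r \<noteq> a \<and> dist r a < d \<longrightarrow>
        dist (l2norm (\<lambda>x. W r x - W a x)) 0 < e"
      unfolding eventually_at by blast
    have dP: "l2norm (\<lambda>x. W r x - W a x) < e" if "r \<in> {a..}" "r \<noteq> a" "dist r a < d" for r
      using dP0[rule_format, of r] that l2norm_nonneg[of "\<lambda>x. W r x - W a x"] by (simp add: dist_real_def)
    define \<tau> where "\<tau> = a + min d (t - a) / 2"
    have \<tau>: "a < \<tau>" "\<tau> < t" "dist \<tau> a < d" using d at by (auto simp: \<tau>_def dist_real_def min_def field_simps)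
    have small: "l2norm (\<lambda>x. W \<tau> x - W a x) < e" using dP[of \<tau>] \<tau> by auto
    obtain z where z: "\<tau> < z" "z < t" "c t - c \<tau> = (t - \<tau>) * (- \<theta> * dphi n 1 * U - lam \<theta> lmb n * c z)"
      using MVT2[OF \<tau>(2), of c "\<lambda>s. - \<theta> * dphi n 1 * U - lam \<theta> lmb n * c s"]
        coef_deriv[OF hs] \<tau>(1) unfolding c_def by force
    have "\<bar>- \<theta> * dphi n 1 * U - lam \<theta> lmb n * c z\<bar> \<le> \<bar>- \<theta> * dphi n 1 * U\<bar> + \<bar>lam \<theta> lmb n * c z\<bar>"
      by (rule abs_triangle_ineq4)
    also have "\<dots> = \<theta> * \<bar>dphi n 1\<bar> * \<bar>U\<bar> + \<bar>lam \<theta> lmb n\<bar> * \<bar>c z\<bar>"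
      using th by (simp add: abs_mult)
    also have "\<dots> \<le> B" unfolding B_def using cM[of z] z \<tau> by (intro add_left_mono mult_left_mono) auto
    finally have dz: "\<bar>- \<theta> * dphi n 1 * U - lam \<theta> lmb n * c z\<bar> \<le> B" .
    have 1: "\<bar>c t - c \<tau>\<bar> \<le> (t - a) * B"
    proof -
      have "\<bar>c t - c \<tau>\<bar> = (t - \<tau>) * \<bar>- \<theta> * dphi n 1 * U - lam \<theta> lmb n * c z\<bar>"
        using z \<tau> by (simp add: abs_mult)
      also have "\<dots> \<le> (t - \<tau>) * B" using dz \<tau> by (intro mult_left_mono) auto
      also have "\<dots> \<le> (t - a) * B" using B0 \<tau> by (intro mult_right_mono) auto
      finally show ?thesis .
    qed
    have 2: "\<bar>c \<tau> - c a\<bar> \<le> e"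
    proof -
      have sa: "sq_int (W a)" and st: "sq_int (W \<tau>)" using heat_sq[OF hs] \<tau> by auto
      have "c \<tau> - c a = integral {0..1} (\<lambda>x. phi n x * (W \<tau> x - W a x))"
        unfolding c_def
        by (subst integral_diff[symmetric]) (auto intro: sq_int_prod sq_int_phi sa st simp: algebra_simps)
      also have "\<bar>\<dots>\<bar> \<le> l2norm (phi n) * l2norm (\<lambda>x. W \<tau> x - W a x)"
        by (rule CS[OF sq_int_phi sq_int_diff[OF st sa]])
      finally show ?thesis using small l2norm_phi[OF n] by simp
    qed
    show "\<bar>c t - c a\<bar> \<le> (t - a) * B + e" using 1 2 by linarith
  qed
qed




lemma int_diff_sq:
  assumes "sq_int f" "sq_int g" "sq_int h"
  shows "integral {0..1} (\<lambda>x. f x * (g x - h x)) =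
    integral {0..1} (\<lambda>x. f x * g x) - integral {0..1} (\<lambda>x. f x * h x)"
proof -
  have "integral {0..1} (\<lambda>x. f x * (g x - h x)) = integral {0..1} (\<lambda>x. f x * g x - f x * h x)"
    by (simp add: right_diff_distrib)
  also have "\<dots> = integral {0..1} (\<lambda>x. f x * g x) - integral {0..1} (\<lambda>x. f x * h x)"
    by (rule integral_diff[OF sq_int_prod[OF assms(1,2)] sq_int_prod[OF assms(1,3)]])
  finally show ?thesis .
qed

lemma main_est:
  assumes hs: "heat_sol \<theta> lmb a U W"
    and U: "U = integral {0..1} (\<lambda>y. kgain \<theta> lmb c y * W a y)"
    and kp: "kappa \<theta> lmb c > 0" and th: "\<theta> > 0" and at: "a < t"
  shows "\<bar>integral {0..1} (\<lambda>y. kgain \<theta> lmb c y * (W a y - W t y))\<bar>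
    \<le> (t - a) * \<theta> * l2norm (kgain \<theta> lmb c) * FN \<theta> lmb c N * l2norm (W a)
      + (t - a) * GN \<theta> lmb c N * Sup ((\<lambda>s. l2norm (W s)) ` {a..t})
      + l2norm (\<lambda>y. kgain \<theta> lmb c y - gN \<theta> lmb c N y) * l2norm (W a)
      + l2norm (\<lambda>y. kgain \<theta> lmb c y - gN \<theta> lmb c N y) * l2norm (W t)"
proof -
  define k where "k = kgain \<theta> lmb c"
  define g where "g = gN \<theta> lmb c N"
  define M where "M = Sup ((\<lambda>s. l2norm (W s)) ` {a..t})"
  define C where "C n = integral {0..1} (\<lambda>x. phi n x * W a x) - integral {0..1} (\<lambda>x. phi n x * W t x)" for n
  define D where "D x = W a x - W t x" for x
  have sa: "sq_int (W a)" and st: "sq_int (W t)" using heat_sq[OF hs] at by auto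
  have sD: "sq_int D" unfolding D_def by (rule sq_int_diff[OF sa st])
  have sk: "sq_int k" unfolding k_def by (rule sq_int_cont[OF kgain_cont[OF kp]])
  have gcont: "continuous_on {0..1} g"
    unfolding g_def gN_def by (intro continuous_on_sum continuous_on_mult continuous_on_const phi_cont)
  have sg: "sq_int g" by (rule sq_int_cont[OF gcont])
  have skg: "sq_int (\<lambda>y. k y - g y)" by (rule sq_int_diff[OF sk sg])
  have split: "integral {0..1} (\<lambda>y. k y * D y) =
      integral {0..1} (\<lambda>y. (k y - g y) * D y) + integral {0..1} (\<lambda>y. g y * D y)"
  proof -
    have "integral {0..1} (\<lambda>y. k y * D y) = integral {0..1} (\<lambda>y. (k y - g y) * D y + g y * D y)"
      by (rule integral_cong) (simp add: algebra_simps)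
    also have "\<dots> = integral {0..1} (\<lambda>y. (k y - g y) * D y) + integral {0..1} (\<lambda>y. g y * D y)"
      by (rule integral_add[OF sq_int_prod[OF skg sD] sq_int_prod[OF sg sD]])
    finally show ?thesis .
  qed
  have e1: "\<bar>integral {0..1} (\<lambda>y. (k y - g y) * D y)\<bar> \<le> l2norm (\<lambda>y. k y - g y) * l2norm (W a)
      + l2norm (\<lambda>y. k y - g y) * l2norm (W t)"
  proof -
    have "integral {0..1} (\<lambda>y. (k y - g y) * D y) =
        integral {0..1} (\<lambda>y. (k y - g y) * W a y) - integral {0..1} (\<lambda>y. (k y - g y) * W t y)"
      unfolding D_def by (rule int_diff_sq[OF skg sa st])
    then show ?thesis using CS[OF skg sa] CS[OF skg st] by linarith
  qed
  have gsum: "integral {0..1} (\<lambda>y. g y * D y) = (\<Sum>n=1..N. kcoef \<theta> lmb c n * C n)"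
  proof -
    have "integral {0..1} (\<lambda>y. g y * D y) = integral {0..1} (\<lambda>y. \<Sum>n=1..N. kcoef \<theta> lmb c n * (phi n y * D y))"
      unfolding g_def gN_def by (simp add: sum_distrib_right mult.assoc)
    also have "\<dots> = (\<Sum>n=1..N. integral {0..1} (\<lambda>y. kcoef \<theta> lmb c n * (phi n y * D y)))"
      by (rule integral_sum) (auto intro!: int_cmul sq_int_prod[OF sq_int_phi sD])
    also have "\<dots> = (\<Sum>n=1..N. kcoef \<theta> lmb c n * C n)"
    proof (rule sum.cong[OF refl])
      fix n
      have "integral {0..1} (\<lambda>y. phi n y * D y) = C n"
        unfolding C_def D_def by (rule int_diff_sq[OF sq_int_phi sa st])
      then show "integral {0..1} (\<lambda>y. kcoef \<theta> lmb c n * (phi n y * D y)) = kcoef \<theta> lmb c n * C n"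
        by simp
    qed
    finally show ?thesis .
  qed
  have Cb: "\<bar>C n\<bar> \<le> (t - a) * (\<theta> * \<bar>dphi n 1\<bar> * \<bar>U\<bar> + \<bar>lam \<theta> lmb n\<bar> * M)" if "n \<in> {1..N}" for n
    using coef_est[OF hs at _ th, of n] that unfolding C_def M_def by (simp add: abs_minus_commute)
  have e2: "\<bar>\<Sum>n=1..N. kcoef \<theta> lmb c n * C n\<bar> \<le>
      (t - a) * \<theta> * \<bar>U\<bar> * FN \<theta> lmb c N + (t - a) * GN \<theta> lmb c N * M"
  proof -
    have "\<bar>\<Sum>n=1..N. kcoef \<theta> lmb c n * C n\<bar> \<le> (\<Sum>n=1..N. \<bar>kcoef \<theta> lmb c n\<bar> * \<bar>C n\<bar>)"
      by (rule order_trans[OF sum_abs]) (simp add: abs_mult)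
    also have "\<dots> \<le> (\<Sum>n=1..N. \<bar>kcoef \<theta> lmb c n\<bar> * ((t - a) * (\<theta> * \<bar>dphi n 1\<bar> * \<bar>U\<bar> + \<bar>lam \<theta> lmb n\<bar> * M)))"
      by (rule sum_mono) (use Cb in \<open>auto intro: mult_left_mono\<close>)
    also have "\<dots> = (\<Sum>n=1..N. (t - a) * \<theta> * \<bar>U\<bar> * \<bar>kcoef \<theta> lmb c n * deriv (phi n) 1\<bar>
         + (t - a) * M * \<bar>kcoef \<theta> lmb c n * lam \<theta> lmb n\<bar>)"
      by (rule sum.cong[OF refl]) (simp add: deriv_phi abs_mult algebra_simps)
    also have "\<dots> = (t - a) * \<theta> * \<bar>U\<bar> * FN \<theta> lmb c N + (t - a) * GN \<theta> lmb c N * M"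
      unfolding FN_def GN_def by (simp add: sum.distrib sum_distrib_left mult_ac)
    finally show ?thesis .
  qed
  have Ub: "\<bar>U\<bar> \<le> l2norm k * l2norm (W a)" using CS[OF sk sa] U by (simp add: k_def)
  have FN0: "FN \<theta> lmb c N \<ge> 0" unfolding FN_def by (simp add: sum_nonneg)
  have e3: "(t - a) * \<theta> * \<bar>U\<bar> * FN \<theta> lmb c N \<le> (t - a) * \<theta> * (l2norm k * l2norm (W a)) * FN \<theta> lmb c N"
    using Ub at th FN0 by (intro mult_right_mono mult_left_mono) auto
  have "\<bar>integral {0..1} (\<lambda>y. k y * D y)\<bar>
      \<le> \<bar>integral {0..1} (\<lambda>y. (k y - g y) * D y)\<bar> + \<bar>integral {0..1} (\<lambda>y. g y * D y)\<bar>"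
    unfolding split by (rule abs_triangle_ineq)
  then have "\<bar>integral {0..1} (\<lambda>y. k y * D y)\<bar> \<le> (t - a) * \<theta> * (l2norm k * l2norm (W a)) * FN \<theta> lmb c N
      + (t - a) * GN \<theta> lmb c N * M + l2norm (\<lambda>y. k y - g y) * l2norm (W a)
      + l2norm (\<lambda>y. k y - g y) * l2norm (W t)"
    using e1 e2 e3 gsum by linarith
  then show ?thesis by (simp add: k_def g_def M_def D_def mult_ac)
qed




definition clstep where
  "clstep \<theta> lmb c \<beta> u ti tsi (wi :: real \<Rightarrow> real \<Rightarrow> real) (wsi :: real \<Rightarrow> real \<Rightarrow> real) \<longleftrightarrow>
           (let a = real_of_ereal ti;
                k = kgain \<theta> lmb c;
                U = integral {0..1} (\<lambda>y. k y * wi a y);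
                S = {t. t > a \<and>
                        \<bar>integral {0..1} (\<lambda>y. k y * (wi a y - wi t y))\<bar>
                          > \<beta> * l2norm k * l2norm (wi t) + \<beta> * l2norm k * l2norm (wi a)}
            in heat_sol \<theta> lmb a U wi \<and>
               (S = {} \<longrightarrow> tsi = \<infinity>) \<and>
               (S \<noteq> {} \<longrightarrow> tsi = ereal (Inf S)) \<and>
               (\<forall>t. ereal a \<le> ereal t \<and> ereal t < tsi \<longrightarrow> u t = wi t) \<and>
               (tsi \<noteq> \<infinity> \<longrightarrow>
                  wsi (real_of_ereal tsi) = wi (real_of_ereal tsi)))"

lemma cl_ex: "closed_loop \<theta> lmb c \<beta> u0 u te \<Longrightarrow>
   \<exists>w. \<forall>i. te i \<noteq> \<infinity> \<longrightarrow> clstep \<theta> lmb c \<beta> u (te i) (te (Suc i)) (w i) (w (Suc i))"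
  unfolding closed_loop_def clstep_def by blast

lemma clstep_heat: "clstep \<theta> lmb c \<beta> u ti tsi wi wsi \<Longrightarrow>
  heat_sol \<theta> lmb (real_of_ereal ti) (integral {0..1} (\<lambda>y. kgain \<theta> lmb c y * wi (real_of_ereal ti) y)) wi"
  unfolding clstep_def Let_def by blast

lemma clstep_u: "clstep \<theta> lmb c \<beta> u ti tsi wi wsi \<Longrightarrow>
  \<forall>t. ereal (real_of_ereal ti) \<le> ereal t \<and> ereal t < tsi \<longrightarrow> u t = wi t"
  unfolding clstep_def Let_def by blast

lemma fin_aux: "(S = {} \<longrightarrow> x = \<infinity>) \<Longrightarrow> (S \<noteq> {} \<longrightarrow> x = ereal (Inf S)) \<Longrightarrow> x = \<infinity> \<or> (\<exists>r. x = ereal r)"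
  by (cases "S = {}") auto

lemma clstep_fin: "clstep \<theta> lmb c \<beta> u ti tsi wi wsi \<Longrightarrow> tsi = \<infinity> \<or> (\<exists>r. tsi = ereal r)"
  unfolding clstep_def Let_def by (elim conjE) (rule fin_aux; assumption)

theorem mainTheorem2:
  fixes \<theta> lmb c \<beta> t :: real and u0 :: "real \<Rightarrow> real" and u :: "real \<Rightarrow> real \<Rightarrow> real"
    and te :: "nat \<Rightarrow> ereal" and N j :: nat
  assumes "\<theta> > 0" and "lmb \<ge> \<theta> * pi\<^sup>2" and "c \<ge> 0" and "\<beta> > 0"
    and "sq_int u0"
    and "closed_loop \<theta> lmb c \<beta> u0 u te"
    and "N \<ge> 1"
    and "te j \<noteq> \<infinity>" and "te j \<le> ereal t" and "ereal t < te (Suc j)"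
  shows "\<bar>integral {0..1} (\<lambda>y. kgain \<theta> lmb c y * (u (real_of_ereal (te j)) y - u t y))\<bar>
    \<le> (t - real_of_ereal (te j)) * \<theta> * l2norm (kgain \<theta> lmb c) * FN \<theta> lmb c N
          * l2norm (u (real_of_ereal (te j)))
      + (t - real_of_ereal (te j)) * GN \<theta> lmb c N
          * Sup ((\<lambda>s. l2norm (u s)) ` {real_of_ereal (te j)..t})
      + l2norm (\<lambda>y. kgain \<theta> lmb c y - gN \<theta> lmb c N y) * l2norm (u (real_of_ereal (te j)))
      + l2norm (\<lambda>y. kgain \<theta> lmb c y - gN \<theta> lmb c N y) * l2norm (u t)"
proof -
  define a where "a = real_of_ereal (te j)"
  obtain w where Wall: "\<forall>i. te i \<noteq> \<infinity> \<longrightarrow> clstep \<theta> lmb c \<beta> u (te i) (te (Suc i)) (w i) (w (Suc i))"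
    using cl_ex[OF assms(6)] by blast
  have cj: "clstep \<theta> lmb c \<beta> u (te j) (te (Suc j)) (w j) (w (Suc j))" using Wall assms(8) by blast
  have hs: "heat_sol \<theta> lmb a (integral {0..1} (\<lambda>y. kgain \<theta> lmb c y * w j a y)) (w j)"
    using clstep_heat[OF cj] unfolding a_def .
  have ue: "\<forall>s. ereal a \<le> ereal s \<and> ereal s < te (Suc j) \<longrightarrow> u s = w j s"
    using clstep_u[OF cj] unfolding a_def .
  have fin: "\<forall>i. te i \<noteq> \<infinity> \<longrightarrow> te (Suc i) = \<infinity> \<or> (\<exists>r. te (Suc i) = ereal r)"
    using Wall clstep_fin by blast
  have nm: "te j \<noteq> -\<infinity>"
  proof (cases j)
    case 0
    then show ?thesis using assms(6) unfolding closed_loop_def by auto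
  next
    case (Suc i)
    show ?thesis
    proof (cases "te i = \<infinity>")
      case True
      then show ?thesis using assms(6) Suc unfolding closed_loop_def by auto
    next
      case False
      then show ?thesis using fin Suc by auto
    qed
  qed
  have tea: "te j = ereal a" unfolding a_def using nm assms(8) by (cases "te j") auto
  have at: "a \<le> t" using assms(9) tea by simp
  have alt: "ereal a < te (Suc j)" using at assms(10) by (meson ereal_less_eq(3) le_less_trans)
  have ua: "u a = w j a" using ue alt by auto
  have ut: "u t = w j t" using ue tea assms(10) at by auto
  have img: "(\<lambda>s. l2norm (u s)) ` {a..t} = (\<lambda>s. l2norm (w j s)) ` {a..t}"
  proof (rule image_cong[OF refl])
    fix s assume "s \<in> {a..t}"
    then have "ereal s < te (Suc j)" using assms(10) by (meson atLeastAtMost_iff ereal_less_eq(3) le_less_trans)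
    then have "u s = w j s" using ue \<open>s \<in> {a..t}\<close> by auto
    then show "l2norm (u s) = l2norm (w j s)" by simp
  qed
  have kp: "kappa \<theta> lmb c > 0"
  proof -
    have "\<theta> * pi\<^sup>2 > 0" using assms(1) by simp
    then have "lmb + c > 0" using assms(2,3) by linarith
    then show ?thesis using assms(1) by (simp add: kappa_def)
  qed
  show ?thesis
  proof (cases "t = a")
    case True
    then show ?thesis unfolding a_def[symmetric] by (simp add: l2norm_nonneg)
  next
    case False
    then have "a < t" using at by simp
    from main_est[OF hs refl kp assms(1) this, of N]
    show ?thesis unfolding a_def[symmetric] ua ut img .
  qed
qed


end
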